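(* Let $M\in\mathrm{rep}\,G_{m,n}$ be arbitrary and $\ast\in\{ss,cc,tot\}$. Then $$\sum_{I\in\mathbb{I}_{m,n}}\tilde d^\ast_M(I)\cdot\underline{\dim}(V_I)=\underline{\dim}(M),$$ where $\underline{\dim}(X)=(\dim X(v))_{v}$ is the dimension vector indexed by the vertices $v$ of $G_{m,n}$.
   Context: Fix a field $K$. For integers $m,n\ge1$, $G_{m,n}$ is the equioriented commutative $m\times n$ grid: the quiver with vertex set $\{(i,j):1\le i\le m,\ 1\le j\le n\}$ and arrows $(i,j)\to(i,j+1)$ and $(i,j)\to(i+1,j)$, bound by all commutativity relations; $\mathrm{rep}\,G_{m,n}$ is its category of finite-dimensional representations over $K$ satisfying the relations. An interval of $G_{m,n}$ is a nonempty full subquiver $I$ which is connected (as an undirected graph) and convex (whenever $x,y\in I_0$ and there are paths $x\to z$, $z\to y$ in $G_{m,n}$, then $z\in I_0$); $\mathbb{I}_{m,n}$ is the set of intervals ordered by inclusion of vertex sets. The interval representation $V_I$ has $K$ at vertices of $I$, $0$ elsewhere, identity maps on arrows inside $I$ and zero maps otherwise. Essential vertices: $I^{ss}_0$ is the set of sources and sinks of the quiver $I$; $I^{cc}_0=I_0\cap(\mathrm{pr}_1(I^{ss}_0)\times\mathrm{pr}_2(I^{ss}_0))$ with $\mathrm{pr}_1,\mathrm{pr}_2$ coordinate projections; $I^{tot}_0=I_0$. Let $KG_{m,n}$ be the $K$-linear category whose objects are the vertices and whose morphisms are $K$-linear combinations of paths modulo the commutativity relations; representations are $K$-linear functors $KG_{m,n}\to\mathrm{vect}_K$.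 For $\ast\in\{ss,cc,tot\}$, $\mathcal{C}^\ast_I$ is the full subcategory of $KG_{m,n}$ on $I^\ast_0$, and $M^\ast_I:=M|_{\mathcal{C}^\ast_I}$. The compressed multiplicity $\bar d^\ast_M(I)$ is the multiplicity of the indecomposable $(V_I)^\ast_I$ as a direct summand of $M^\ast_I$. Let $\mu$ be the Möbius function of the finite poset $\mathbb{I}_{m,n}$ ($\mu([I,I])=1$, $\mu([I,J])=-\sum_{I\le L<J}\mu([I,L])$ for $I<J$), and $\tilde d^\ast_M(I):=\sum_{J\ge I}\mu([I,J])\,\bar d^\ast_M(J)$. *)

theory Defs
  imports "Jordan_Normal_Form.Matrix"
begin

type_synonym vert = "nat \<times> nat"

definition grid_verts :: "nat \<Rightarrow> nat \<Rightarrow> vert set" where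
  "grid_verts m n = {(i,j). 1 \<le> i \<and> i \<le> m \<and> 1 \<le> j \<and> j \<le> n}"

text \<open>There is a path x to y in G_{m,n} iff x is componentwise below y.\<close>
definition vle :: "vert \<Rightarrow> vert \<Rightarrow> bool" where
  "vle x y \<longleftrightarrow> fst x \<le> fst y \<and> snd x \<le> snd y"

definition grid_arrow :: "nat \<Rightarrow> nat \<Rightarrow> vert \<Rightarrow> vert \<Rightarrow> bool" where
  "grid_arrow m n x y \<longleftrightarrow> x \<in> grid_verts m n \<and> y \<in> grid_verts m n \<and>
     (y = (fst x, snd x + 1) \<or> y = (fst x + 1, snd x))"

definition connected_verts :: "nat \<Rightarrow> nat \<Rightarrow> vert set \<Rightarrow> bool" where
  "connected_verts m n I \<longleftrightarrow> (\<forall>x\<in>I. \<forall>y\<in>I.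
     (\<lambda>a b. a \<in> I \<and> b \<in> I \<and> (grid_arrow m n a b \<or> grid_arrow m n b a))\<^sup>*\<^sup>* x y)"

definition convex_verts :: "nat \<Rightarrow> nat \<Rightarrow> vert set \<Rightarrow> bool" where
  "convex_verts m n I \<longleftrightarrow> (\<forall>x\<in>I. \<forall>y\<in>I. \<forall>z\<in>grid_verts m n. vle x z \<and> vle z y \<longrightarrow> z \<in> I)"

text \<open>Intervals are identified with their vertex sets (full subquivers).\<close>
definition intervals :: "nat \<Rightarrow> nat \<Rightarrow> vert set set" where
  "intervals m n = {I. I \<noteq> {} \<and> I \<subseteq> grid_verts m n \<and> connected_verts m n I \<and> convex_verts m n I}"

datatype ess = SS | CC | TOT

definition sources :: "nat \<Rightarrow> nat \<Rightarrow> vert set \<Rightarrow> vert set" where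
  "sources m n I = {x\<in>I. \<not> (\<exists>y\<in>I. grid_arrow m n y x)}"

definition sinks :: "nat \<Rightarrow> nat \<Rightarrow> vert set \<Rightarrow> vert set" where
  "sinks m n I = {x\<in>I. \<not> (\<exists>y\<in>I. grid_arrow m n x y)}"

definition ess_verts :: "nat \<Rightarrow> nat \<Rightarrow> ess \<Rightarrow> vert set \<Rightarrow> vert set" where
  "ess_verts m n e I = (case e of
      SS \<Rightarrow> sources m n I \<union> sinks m n I
    | CC \<Rightarrow> I \<inter> (fst ` (sources m n I \<union> sinks m n I) \<times> snd ` (sources m n I \<union> sinks m n I))
    | TOT \<Rightarrow> I)"

text \<open>Hom(x,y) in KG_{m,n} is K (one path class) if x \<le> y and 0 otherwise. Hence a
  K-linear functor on the full subcategory on a vertex set S is given by a dimension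
  K^(d x) at each x \<in> S and a matrix f x y : K^(d x) \<rightarrow> K^(d y) for x \<le> y in S,
  functorially. Values outside S are irrelevant.\<close>

type_synonym 'k rep = "(vert \<Rightarrow> nat) \<times> (vert \<Rightarrow> vert \<Rightarrow> 'k mat)"

definition is_rep :: "vert set \<Rightarrow> 'k::field rep \<Rightarrow> bool" where
  "is_rep S M \<longleftrightarrow>
     (\<forall>x\<in>S. snd M x x = 1\<^sub>m (fst M x)) \<and>
     (\<forall>x\<in>S. \<forall>y\<in>S. vle x y \<longrightarrow> snd M x y \<in> carrier_mat (fst M y) (fst M x)) \<and>
     (\<forall>x\<in>S. \<forall>y\<in>S. \<forall>z\<in>S. vle x y \<and> vle y z \<longrightarrow> snd M x z = snd M y z * snd M x y)"

definition rep_iso :: "vert set \<Rightarrow> 'k::field rep \<Rightarrow> 'k rep \<Rightarrow> bool" where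
  "rep_iso S M N \<longleftrightarrow> (\<exists>\<phi>. (\<forall>x\<in>S. \<phi> x \<in> carrier_mat (fst N x) (fst M x) \<and> invertible_mat (\<phi> x)) \<and>
     (\<forall>x\<in>S. \<forall>y\<in>S. vle x y \<longrightarrow> snd N x y * \<phi> x = \<phi> y * snd M x y))"

definition rep_dsum :: "'k::field rep \<Rightarrow> 'k rep \<Rightarrow> 'k rep" where
  "rep_dsum M N = ((\<lambda>x. fst M x + fst N x),
     (\<lambda>x y. four_block_mat (snd M x y) (0\<^sub>m (fst M y) (fst N x))
                           (0\<^sub>m (fst N y) (fst M x)) (snd N x y)))"

definition rep_zero :: "'k::field rep" where
  "rep_zero = ((\<lambda>x. 0), (\<lambda>x y. 0\<^sub>m 0 0))"

fun rep_pow :: "'k::field rep \<Rightarrow> nat \<Rightarrow> 'k rep" where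
  "rep_pow N 0 = rep_zero"
| "rep_pow N (Suc k) = rep_dsum N (rep_pow N k)"

definition summand_mult :: "vert set \<Rightarrow> 'k::field rep \<Rightarrow> 'k rep \<Rightarrow> nat" where
  "summand_mult S N X = (GREATEST k. \<exists>Y. is_rep S Y \<and> rep_iso S X (rep_dsum (rep_pow N k) Y))"

definition interval_rep :: "vert set \<Rightarrow> 'k::field rep" where
  "interval_rep I = ((\<lambda>x. if x \<in> I then 1 else 0),
     (\<lambda>x y. if x \<in> I \<and> y \<in> I then 1\<^sub>m 1
            else 0\<^sub>m (if y \<in> I then 1 else 0) (if x \<in> I then 1 else 0)))"

text \<open>Restriction M^*_I to C^*_I is the same data regarded on ess_verts; the compressed
  multiplicity is the multiplicity of (V_I)^*_I as a summand of M^*_I.\<close>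
definition compressed_mult :: "nat \<Rightarrow> nat \<Rightarrow> ess \<Rightarrow> 'k::field rep \<Rightarrow> vert set \<Rightarrow> nat" where
  "compressed_mult m n e M I = summand_mult (ess_verts m n e I) (interval_rep I) M"

definition moebius :: "'a set set \<Rightarrow> 'a set \<Rightarrow> 'a set \<Rightarrow> int" where
  "moebius P = (THE \<mu>. \<forall>I J. \<mu> I J =
      (if I \<in> P \<and> J \<in> P \<and> I \<subseteq> J then
         (if I = J then 1 else - (\<Sum>L\<in>{L\<in>P. I \<subseteq> L \<and> L \<subset> J}. \<mu> I L))
       else 0))"

definition moebius_inv_mult :: "nat \<Rightarrow> nat \<Rightarrow> ess \<Rightarrow> 'k::field rep \<Rightarrow> vert set \<Rightarrow> int" where
  "moebius_inv_mult m n e M I =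
     (\<Sum>J\<in>{J\<in>intervals m n. I \<subseteq> J}. moebius (intervals m n) I J * int (compressed_mult m n e M J))"

end

theory Submission
  imports Defs
begin

fun muf :: "'a set set \<Rightarrow> 'a set \<Rightarrow> 'a set \<Rightarrow> nat \<Rightarrow> int" where
  "muf P I J 0 = (if I \<in> P \<and> J \<in> P \<and> I \<subseteq> J \<and> I = J then 1 else 0)"
| "muf P I J (Suc k) = (if I \<in> P \<and> J \<in> P \<and> I \<subseteq> J then
      (if I = J then 1 else - (\<Sum>L\<in>{L\<in>P. I \<subseteq> L \<and> L \<subset> J}. muf P I L k)) else 0)"

lemma muf_stable:
  "finite J \<Longrightarrow> card J \<le> k \<Longrightarrow> muf P I J k = muf P I J (Suc k)"
proof (induction k arbitrary: J)
  case 0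
  then have "J = {}" by simp
  then show ?case by auto
next
  case (Suc k)
  have "(\<Sum>L\<in>{L\<in>P. I \<subseteq> L \<and> L \<subset> J}. muf P I L k) = (\<Sum>L\<in>{L\<in>P. I \<subseteq> L \<and> L \<subset> J}. muf P I L (Suc k))"
  proof (rule sum.cong)
    fix L assume "L \<in> {L\<in>P. I \<subseteq> L \<and> L \<subset> J}"
    then have "L \<subset> J" by auto
    then have "finite L" "card L < card J" using Suc.prems by (auto intro: psubset_card_mono finite_subset)
    then show "muf P I L k = muf P I L (Suc k)" using Suc.IH Suc.prems by auto
  qed simp
  then show ?case by simp
qed

lemma muf_stable2:
  assumes "finite J" "card J \<le> k"
  shows "muf P I J k = muf P I J (card J)"
proof -
  have "\<forall>d. muf P I J (card J + d) = muf P I J (card J)"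
  proof
    fix d show "muf P I J (card J + d) = muf P I J (card J)"
      by (induction d) (use muf_stable[OF assms(1)] in auto)
  qed
  then show ?thesis using assms(2) by (metis le_add_diff_inverse)
qed

definition mu0 :: "'a set set \<Rightarrow> 'a set \<Rightarrow> 'a set \<Rightarrow> int" where
  "mu0 P I J = muf P I J (card J)"

lemma mu0_rec:
  assumes fin: "\<forall>J\<in>P. finite J"
  shows "mu0 P I J = (if I \<in> P \<and> J \<in> P \<and> I \<subseteq> J then
         (if I = J then 1 else - (\<Sum>L\<in>{L\<in>P. I \<subseteq> L \<and> L \<subset> J}. mu0 P I L))
       else 0)"
proof (cases "I \<in> P \<and> J \<in> P \<and> I \<subseteq> J \<and> I \<noteq> J")
  case True
  then have fJ: "finite J" and ps: "I \<subset> J" using fin by auto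
  then have "card I < card J" by (simp add: psubset_card_mono)
  then obtain k where k: "card J = Suc k" by (cases "card J") auto
  have "(\<Sum>L\<in>{L\<in>P. I \<subseteq> L \<and> L \<subset> J}. muf P I L k) = (\<Sum>L\<in>{L\<in>P. I \<subseteq> L \<and> L \<subset> J}. mu0 P I L)"
  proof (rule sum.cong)
    fix L assume "L \<in> {L\<in>P. I \<subseteq> L \<and> L \<subset> J}"
    then have "L \<subset> J" by auto
    then have "finite L" "card L < card J" using fJ by (auto intro: psubset_card_mono finite_subset)
    then have "card L \<le> k" using k by simp
    then show "muf P I L k = mu0 P I L" unfolding mu0_def using muf_stable2 \<open>finite L\<close> by blast
  qed simp
  then show ?thesis using True k unfolding mu0_def by simp
next
  case False
  then show ?thesis unfolding mu0_def by (cases "card J") auto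
qed

lemma moebius_eq:
  assumes fin: "\<forall>J\<in>P. finite J"
  shows "moebius P = mu0 P"
  unfolding moebius_def
proof (rule the_equality)
  show "\<forall>I J. mu0 P I J = (if I \<in> P \<and> J \<in> P \<and> I \<subseteq> J then
         (if I = J then 1 else - (\<Sum>L\<in>{L\<in>P. I \<subseteq> L \<and> L \<subset> J}. mu0 P I L))
       else 0)" using mu0_rec[OF fin] by blast
next
  fix \<mu> :: "'a set \<Rightarrow> 'a set \<Rightarrow> int" assume H: "\<forall>I J. \<mu> I J = (if I \<in> P \<and> J \<in> P \<and> I \<subseteq> J then
         (if I = J then 1 else - (\<Sum>L\<in>{L\<in>P. I \<subseteq> L \<and> L \<subset> J}. \<mu> I L))
       else 0)"
  show "\<mu> = mu0 P"
  proof (intro ext)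
    fix I J
    show "\<mu> I J = mu0 P I J"
    proof (cases "J \<in> P")
      case False
      then show ?thesis using H mu0_rec[OF fin] by metis
    next
      case True
      then have "finite J" using fin by auto
      then show ?thesis
      proof (induction J rule: finite_psubset_induct)
        case (psubset A)
        have "(\<Sum>L\<in>{L\<in>P. I \<subseteq> L \<and> L \<subset> A}. \<mu> I L) = (\<Sum>L\<in>{L\<in>P. I \<subseteq> L \<and> L \<subset> A}. mu0 P I L)"
          using psubset.IH by (intro sum.cong) auto
        moreover have "\<mu> I A = (if I \<in> P \<and> A \<in> P \<and> I \<subseteq> A then
         (if I = A then 1 else - (\<Sum>L\<in>{L\<in>P. I \<subseteq> L \<and> L \<subset> A}. \<mu> I L)) else 0)"
          using H by blast
        ultimately show ?case using mu0_rec[OF fin, of I A] by simp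
      qed
    qed
  qed
qed

lemma moebius_sum:
  assumes fin: "\<forall>J\<in>P. finite J" and finP: "finite P" and IP: "I \<in> P" and KP: "K \<in> P"
  shows "(\<Sum>J\<in>P. if I \<subseteq> J \<and> J \<subseteq> K then moebius P I J else 0) = (if K = I then 1 else 0)"
proof -
  have "(\<Sum>J\<in>P. if I \<subseteq> J \<and> J \<subseteq> K then moebius P I J else 0) = (\<Sum>J\<in>{J\<in>P. I \<subseteq> J \<and> J \<subseteq> K}. moebius P I J)"
    using finP by (simp add: sum.inter_filter)
  also have "\<dots> = (if K = I then 1 else 0)"
  proof (cases "I \<subseteq> K")
    case False
    then have "{J\<in>P. I \<subseteq> J \<and> J \<subseteq> K} = {}" by auto
    moreover have "K \<noteq> I" using False by auto
    ultimately show ?thesis by (metis sum.empty)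
  next
    case True
    show ?thesis
    proof (cases "K = I")
      case True
      then have "{J\<in>P. I \<subseteq> J \<and> J \<subseteq> K} = {I}" using IP by auto
      then show ?thesis using True mu0_rec[OF fin, of I I] IP moebius_eq[OF fin] by simp
    next
      case False
      have eq: "{J\<in>P. I \<subseteq> J \<and> J \<subseteq> K} = insert K {L\<in>P. I \<subseteq> L \<and> L \<subset> K}" using True KP by auto
      have fs: "finite {L\<in>P. I \<subseteq> L \<and> L \<subset> K}" using finP by auto
      have "moebius P I K = - (\<Sum>L\<in>{L\<in>P. I \<subseteq> L \<and> L \<subset> K}. moebius P I L)"
        using mu0_rec[OF fin, of I K] moebius_eq[OF fin] IP KP True False by auto
      then show ?thesis unfolding eq using fs False by (simp add: sum.insert)
    qed
  qed
  finally show ?thesis .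
qed

lemma inversion_exists:
  fixes f :: "'a set \<Rightarrow> int"
  assumes "finite P"
  shows "\<exists>h. \<forall>x\<in>P. f x = (\<Sum>y\<in>{y\<in>P. x \<subseteq> y}. h y)"
  using assms
proof (induction P rule: finite_psubset_induct)
  case (psubset P)
  show ?case
  proof (cases "P = {}")
    case True then show ?thesis by auto
  next
    case False
    obtain m where mP: "m \<in> P" and mmin: "\<forall>b\<in>P. b \<le> m \<longrightarrow> m = b"
      using finite_has_minimal[OF psubset.hyps False] by auto
    define P' where "P' = P - {m}"
    have "P' \<subset> P" using mP P'_def by auto
    then obtain h' where h': "\<forall>x\<in>P'. f x = (\<Sum>y\<in>{y\<in>P'. x \<subseteq> y}. h' y)" using psubset.IH by blast
    define h where "h = h'(m := f m - (\<Sum>y\<in>{y\<in>P'. m \<subseteq> y}. h' y))"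
    have "\<forall>x\<in>P. f x = (\<Sum>y\<in>{y\<in>P. x \<subseteq> y}. h y)"
    proof
      fix x assume xP: "x \<in> P"
      show "f x = (\<Sum>y\<in>{y\<in>P. x \<subseteq> y}. h y)"
      proof (cases "x = m")
        case True
        have eq: "{y\<in>P. x \<subseteq> y} = insert m {y\<in>P'. m \<subseteq> y}" using True mP P'_def by auto
        have fs: "finite {y\<in>P'. m \<subseteq> y}" using psubset.hyps P'_def by auto
        have "(\<Sum>y\<in>{y\<in>P'. m \<subseteq> y}. h y) = (\<Sum>y\<in>{y\<in>P'. m \<subseteq> y}. h' y)"
          by (rule sum.cong) (auto simp: h_def P'_def)
        then show ?thesis unfolding eq using fs True by (simp add: sum.insert P'_def h_def)
      next
        case False
        have eq: "{y\<in>P. x \<subseteq> y} = {y\<in>P'. x \<subseteq> y}"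
          using False mmin xP P'_def by auto
        have "(\<Sum>y\<in>{y\<in>P'. x \<subseteq> y}. h y) = (\<Sum>y\<in>{y\<in>P'. x \<subseteq> y}. h' y)"
          by (rule sum.cong) (auto simp: h_def P'_def)
        then show ?thesis unfolding eq using h' xP False P'_def by auto
      qed
    qed
    then show ?thesis by blast
  qed
qed

lemma four_block_one:
  "four_block_mat (1\<^sub>m a) (0\<^sub>m a b) (0\<^sub>m b a) (1\<^sub>m b :: 'k::field mat) = 1\<^sub>m (a + b)"
  by (rule eq_matI) auto

lemma zero00: "(0\<^sub>m 0 0 :: 'k::field mat) = 1\<^sub>m 0"
  by (rule eq_matI) auto

lemma rep_pow_fst: "fst (rep_pow N k) x = k * fst N x"
  by (induction k) (auto simp: rep_zero_def rep_dsum_def)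

lemma rep_pow_snd:
  assumes "fst N x = 1" "snd N x x = 1\<^sub>m 1"
  shows "snd (rep_pow N k) x x = (1\<^sub>m k :: 'k::field mat)"
proof (induction k)
  case 0 then show ?case by (auto simp: rep_zero_def)
next
  case (Suc k)
  then show ?case using assms four_block_one[of 1 k] by (simp add: rep_dsum_def rep_pow_fst)
qed

lemma singleton_mult:
  fixes M :: "'k::field rep"
  assumes "is_rep {v} M"
  shows "summand_mult {v} (interval_rep {v} :: 'k rep) M = fst M v"
  unfolding summand_mult_def
proof (rule Greatest_equality)
  let ?N = "interval_rep {v} :: 'k rep"
  let ?d = "fst M v"
  let ?X = "rep_dsum (rep_pow ?N ?d) rep_zero"
  have fX: "fst ?X v = ?d" by (simp add: rep_dsum_def rep_pow_fst rep_zero_def interval_rep_def)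
  have sX: "snd ?X v v = 1\<^sub>m ?d"
    using rep_pow_snd[of ?N v ?d] four_block_one[of ?d 0, unfolded zero00[symmetric]]
    by (simp add: rep_dsum_def rep_pow_fst rep_zero_def interval_rep_def)
  have Mvv: "snd M v v = 1\<^sub>m ?d" using assms by (simp add: is_rep_def)
  have inv: "invertible_mat (1\<^sub>m ?d :: 'k mat)"
    unfolding invertible_mat_def inverts_mat_def square_mat.simps
    by (intro conjI exI[of _ "1\<^sub>m ?d"]) auto
  have "is_rep {v} (rep_zero :: 'k rep)" by (auto simp: is_rep_def rep_zero_def)
  moreover have "rep_iso {v} M ?X"
    unfolding rep_iso_def
    by (rule exI[of _ "\<lambda>x. 1\<^sub>m ?d"]) (use fX sX Mvv inv in auto)
  ultimately show "\<exists>Y. is_rep {v} Y \<and> rep_iso {v} M (rep_dsum (rep_pow ?N ?d) Y)" by blast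
next
  fix k assume "\<exists>Y. is_rep {v} Y \<and> rep_iso {v} M (rep_dsum (rep_pow (interval_rep {v} :: 'k rep) k) Y)"
  then obtain Y where "rep_iso {v} M (rep_dsum (rep_pow (interval_rep {v} :: 'k rep) k) Y)" by blast
  then obtain \<phi> :: "vert \<Rightarrow> 'k mat" where "\<phi> v \<in> carrier_mat (fst (rep_dsum (rep_pow (interval_rep {v} :: 'k rep) k) Y) v) (fst M v)"
    "invertible_mat (\<phi> v)"
    unfolding rep_iso_def by auto
  then have "fst (rep_dsum (rep_pow (interval_rep {v} :: 'k rep) k) Y) v = fst M v"
    unfolding invertible_mat_def square_mat.simps by auto
  then show "k \<le> fst M v" by (simp add: rep_dsum_def rep_pow_fst interval_rep_def)
qed

lemma finite_grid: "finite (grid_verts m n)"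
proof -
  have "grid_verts m n \<subseteq> {1..m} \<times> {1..n}" by (auto simp: grid_verts_def)
  then show ?thesis by (rule finite_subset) auto
qed

lemma finite_intervals: "finite (intervals m n)"
proof -
  have "intervals m n \<subseteq> Pow (grid_verts m n)" by (auto simp: intervals_def)
  then show ?thesis using finite_grid by (meson finite_Pow_iff finite_subset)
qed

lemma intervals_fin: "\<forall>J\<in>intervals m n. finite J"
  using finite_grid by (auto simp: intervals_def intro: finite_subset)

lemma singleton_interval:
  assumes "v \<in> grid_verts m n"
  shows "{v} \<in> intervals m n"
  using assms unfolding intervals_def connected_verts_def convex_verts_def vle_def
  by (auto simp: prod_eq_iff)

lemma ess_singleton: "ess_verts m n e {v} = {v}"
  by (cases e) (auto simp: ess_verts_def sources_def sinks_def grid_arrow_def prod_eq_iff)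

theorem mainTheorem16:
  fixes m n :: nat and M :: "'k::field rep" and e :: ess
  assumes "1 \<le> m" and "1 \<le> n"
    and "is_rep (grid_verts m n) M"
  shows "\<forall>v\<in>grid_verts m n.
    (\<Sum>I\<in>intervals m n. moebius_inv_mult m n e M I * int (fst (interval_rep I :: 'k rep) v))
      = int (fst M v)"
proof
  fix v assume v: "v \<in> grid_verts m n"
  define P where "P = intervals m n"
  define d where "d J = int (compressed_mult m n e M J)" for J
  have finP: "finite P" unfolding P_def by (rule finite_intervals)
  have fin: "\<forall>J\<in>P. finite J" unfolding P_def by (rule intervals_fin)
  obtain h where h: "\<forall>x\<in>P. d x = (\<Sum>y\<in>{y\<in>P. x \<subseteq> y}. h y)"
    using inversion_exists[OF finP] by blast
  have g: "moebius_inv_mult m n e M I = h I" if IP: "I \<in> P" for I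
  proof -
    have "moebius_inv_mult m n e M I = (\<Sum>J\<in>{J\<in>P. I \<subseteq> J}. moebius P I J * d J)"
      unfolding moebius_inv_mult_def P_def d_def by simp
    also have "\<dots> = (\<Sum>J\<in>{J\<in>P. I \<subseteq> J}. moebius P I J * (\<Sum>K\<in>P. if J \<subseteq> K then h K else 0))"
      using h finP by (intro sum.cong) (auto simp: sum.inter_filter)
    also have "\<dots> = (\<Sum>J\<in>P. \<Sum>K\<in>P. if I \<subseteq> J \<and> J \<subseteq> K then moebius P I J * h K else 0)"
      using finP by (auto simp: sum.inter_filter sum_distrib_left if_distrib intro!: sum.cong)
    also have "\<dots> = (\<Sum>K\<in>P. \<Sum>J\<in>P. if I \<subseteq> J \<and> J \<subseteq> K then moebius P I J * h K else 0)"
      by (rule sum.swap)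
    also have "\<dots> = (\<Sum>K\<in>P. h K * (\<Sum>J\<in>P. if I \<subseteq> J \<and> J \<subseteq> K then moebius P I J else 0))"
      by (simp add: sum_distrib_left if_distrib mult.commute cong: if_cong)
    also have "\<dots> = (\<Sum>K\<in>P. h K * (if K = I then 1 else 0))"
      using moebius_sum[OF fin finP IP] by (intro sum.cong) auto
    also have "\<dots> = h I" using IP finP by (simp add: if_distrib cong: if_cong)
    finally show ?thesis .
  qed
  have "(\<Sum>I\<in>intervals m n. moebius_inv_mult m n e M I * int (fst (interval_rep I :: 'k rep) v))
      = (\<Sum>I\<in>P. if {v} \<subseteq> I then h I else 0)"
    unfolding P_def using g[unfolded P_def] by (intro sum.cong) (auto simp: interval_rep_def)
  also have "\<dots> = d {v}"
    using h singleton_interval[OF v] finP unfolding P_def by (simp add: sum.inter_filter)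
  also have "\<dots> = int (fst M v)"
  proof -
    have "is_rep {v} M" using assms(3) v unfolding is_rep_def by auto
    then show ?thesis unfolding d_def compressed_mult_def ess_singleton using singleton_mult by metis
  qed
  finally show "(\<Sum>I\<in>intervals m n. moebius_inv_mult m n e M I * int (fst (interval_rep I :: 'k rep) v))
      = int (fst M v)" .
qed

end
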